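(* Let $i_n^B$ and $i_n^D$ denote the numbers of involutions (elements $w$ with $w^2=e$) in $B_n$ and $D_n$ respectively. Then \[2i_n^D-i_n^B=\begin{cases}0 & n\text{ odd},\\ 2^{n/2}(n-1)!!=\dfrac{n!}{(n/2)!} & n\text{ even}.\end{cases}\] Therefore, for all positive integers $n$, $i_n^D\le i_n^B\le 2i_n^D$.
   Context: $B_n$ is the group of permutations $w$ of $\{\pm1,\dots,\pm n\}$ with $w(-i)=-w(i)$ for all $i$, and $D_n=\{w\in B_n:w(1)w(2)\cdots w(n)>0\}$. $(n-1)!!=(n-1)(n-3)\cdots1$ for $n$ even. *)

theory Defs
  imports Complex_Main "HOL-Combinatorics.Permutations"
begin

text \<open>Signed permutations: B_n is the group of permutations w of {+-1,...,+-n}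
  with w(-i) = -w(i). We represent them as functions int => int that permute
  the set {-n..n} - {0} (and are the identity elsewhere).\<close>

definition typeB :: "nat \<Rightarrow> (int \<Rightarrow> int) set" where
  "typeB n = {w. w permutes ({- int n .. int n} - {0}) \<and> (\<forall>i. w (- i) = - w i)}"

definition typeD :: "nat \<Rightarrow> (int \<Rightarrow> int) set" where
  "typeD n = {w \<in> typeB n. (\<Prod>i\<in>{1 .. int n}. w i) > 0}"

definition num_involutions :: "(int \<Rightarrow> int) set \<Rightarrow> nat" where
  "num_involutions G = card {w \<in> G. w \<circ> w = id}"

fun dfact :: "nat \<Rightarrow> nat" where
  "dfact 0 = 1"
| "dfact (Suc 0) = 1"
| "dfact (Suc (Suc m)) = Suc (Suc m) * dfact m"

end

theory Submission
  imports Defs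
begin


definition sA :: "int set \<Rightarrow> int set" where
  "sA S = {x. x \<in> S \<or> - x \<in> S}"

definition sInv :: "int set \<Rightarrow> (int \<Rightarrow> int) set" where
  "sInv S = {w. (\<forall>x. x \<notin> sA S \<longrightarrow> w x = x) \<and> (\<forall>x. w (w x) = x) \<and> (\<forall>x. w (- x) = - w x)}"

definition sT :: "int set \<Rightarrow> int" where
  "sT S = (\<Sum>w\<in>sInv S. sgn (\<Prod>i\<in>S. w i))"

definition sE :: "int \<Rightarrow> int \<Rightarrow> (int \<Rightarrow> int) \<Rightarrow> int \<Rightarrow> int" where
  "sE a v w x = (if x = a then v else if x = - a then - v else if x = v then a else if x = - v then - a else w x)"

lemma sInv_permutes:
  assumes w: "w \<in> sInv S" shows "w permutes sA S"
proof -
  have fx: "\<forall>x. x \<notin> sA S \<longrightarrow> w x = x" and inv: "\<And>x. w (w x) = x"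
    using w unfolding sInv_def by auto
  have "\<exists>!x. w x = y" for y
  proof (rule ex1I[of _ "w y"])
    show "w (w y) = y" by (rule inv)
  next
    fix x assume "w x = y" then show "x = w y" using inv by metis
  qed
  then show ?thesis unfolding permutes_def using fx by blast
qed

lemma finite_sA: "finite S \<Longrightarrow> finite (sA S)"
proof -
  assume "finite S"
  have "sA S \<subseteq> S \<union> uminus ` S" unfolding sA_def by (auto simp: image_iff) (metis minus_minus)
  then show ?thesis using \<open>finite S\<close> finite_subset by blast
qed

lemma finite_sInv: "finite S \<Longrightarrow> finite (sInv S)"
proof -
  assume "finite S"
  have "sInv S \<subseteq> {p. p permutes sA S}" using sInv_permutes by blast
  then show ?thesis using finite_permutations[OF finite_sA[OF \<open>finite S\<close>]] finite_subset by blast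
qed

lemma sInv_maps:
  assumes w: "w \<in> sInv S" and x: "x \<in> sA S" shows "w x \<in> sA S"
proof (rule ccontr)
  have fx: "\<And>x. x \<notin> sA S \<Longrightarrow> w x = x" and inv: "\<And>x. w (w x) = x"
    using w unfolding sInv_def by auto
  assume "w x \<notin> sA S"
  then have "w (w x) = w x" by (rule fx)
  then have "x = w x" using inv by simp
  then show False using x \<open>w x \<notin> sA S\<close> by simp
qed

lemma sInv_empty: "sInv {} = {id}"
  unfolding sInv_def sA_def by auto

lemma sT_empty: "sT {} = 1"
  unfolding sT_def sInv_empty by simp

lemma fiber:
  assumes pos: "\<forall>x\<in>insert a S. x > 0" and aS: "a \<notin> S" and v: "v \<in> sA (insert a S)"
  shows "sE a v ` sInv (S - {\<bar>v\<bar>}) = {w \<in> sInv (insert a S). w a = v}"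
    and "inj_on (sE a v) (sInv (S - {\<bar>v\<bar>}))"
proof -
  let ?S' = "S - {\<bar>v\<bar>}"
  have v0: "v \<noteq> 0" using v pos unfolding sA_def by auto
  have a0: "a > 0" using pos by auto
  have fixw: "w a = a \<and> w (-a) = -a \<and> w v = v \<and> w (-v) = -v" if "w \<in> sInv ?S'" for w
  proof -
    have "a \<notin> sA ?S'" "-a \<notin> sA ?S'" "v \<notin> sA ?S'" "-v \<notin> sA ?S'"
      using pos aS a0 v unfolding sA_def by (auto simp: abs_if)
    then show ?thesis using that unfolding sInv_def by blast
  qed
  show "inj_on (sE a v) (sInv ?S')"
  proof (rule inj_onI)
    fix w1 w2 assume w1: "w1 \<in> sInv ?S'" and w2: "w2 \<in> sInv ?S'" and e: "sE a v w1 = sE a v w2"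
    show "w1 = w2"
    proof
      fix x
      show "w1 x = w2 x"
        using fixw[OF w1] fixw[OF w2] fun_cong[OF e, of x] unfolding sE_def
        by (auto split: if_splits)
    qed
  qed
  show "sE a v ` sInv ?S' = {w \<in> sInv (insert a S). w a = v}"
  proof (intro equalityI subsetI)
    fix u assume "u \<in> sE a v ` sInv ?S'"
    then obtain w where w: "w \<in> sInv ?S'" and u: "u = sE a v w" by auto
    note f = fixw[OF w]
    have inv: "\<And>x. w (w x) = x" and odd: "\<And>x. w (-x) = - w x"
      and out: "\<And>x. x \<notin> sA ?S' \<Longrightarrow> w x = x"
      using w unfolding sInv_def by auto
    have nf: "w x \<noteq> a \<and> w x \<noteq> -a \<and> w x \<noteq> v \<and> w x \<noteq> -v" if "x \<noteq> a" "x \<noteq> -a" "x \<noteq> v" "x \<noteq> -v" for x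
      using that f inv by metis
    have "u a = v" unfolding u sE_def by simp
    moreover have "\<forall>x. x \<notin> sA (insert a S) \<longrightarrow> u x = x"
    proof (intro allI impI)
      fix x assume x: "x \<notin> sA (insert a S)"
      then have "x \<noteq> a" "x \<noteq> -a" "x \<noteq> v" "x \<noteq> -v" using v unfolding sA_def by auto
      moreover have "x \<notin> sA ?S'" using x unfolding sA_def by auto
      ultimately show "u x = x" unfolding u sE_def using out by auto
    qed
    moreover have "\<forall>x. u (u x) = x"
    proof
      fix x
      show "u (u x) = x"
      proof (cases "x = a \<or> x = -a \<or> x = v \<or> x = -v")
        case True
        then show ?thesis unfolding u sE_def using a0 v0 by (auto split: if_splits)
      next
        case False
        then show ?thesis unfolding u sE_def using nf[of x] inv by auto
      qed
    qed
    moreover have "\<forall>x. u (-x) = - u x"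
    proof
      fix x
      show "u (-x) = - u x"
      proof (cases "x = a \<or> x = -a \<or> x = v \<or> x = -v")
        case True
        then show ?thesis unfolding u sE_def using a0 v0 by (auto split: if_splits)
      next
        case False
        then have "-x \<noteq> a \<and> -x \<noteq> -a \<and> -x \<noteq> v \<and> -x \<noteq> -v" by auto
        then show ?thesis unfolding u sE_def using False odd by auto
      qed
    qed
    ultimately show "u \<in> {w \<in> sInv (insert a S). w a = v}" unfolding sInv_def by auto
  next
    fix u assume "u \<in> {w \<in> sInv (insert a S). w a = v}"
    then have uI: "u \<in> sInv (insert a S)" and ua: "u a = v" by auto
    have inv: "\<And>x. u (u x) = x" and odd: "\<And>x. u (-x) = - u x"
      and out: "\<And>x. x \<notin> sA (insert a S) \<Longrightarrow> u x = x"
      using uI unfolding sInv_def by auto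
    have uma: "u (-a) = -v" using odd ua by simp
    have uv: "u v = a" using inv ua by metis
    have umv: "u (-v) = -a" using odd uv by simp
    have nf: "u x \<noteq> a \<and> u x \<noteq> -a \<and> u x \<noteq> v \<and> u x \<noteq> -v" if "x \<noteq> a" "x \<noteq> -a" "x \<noteq> v" "x \<noteq> -v" for x
      using that ua uma uv umv inv by metis
    define w where "w = (\<lambda>x. if x = a \<or> x = -a \<or> x = v \<or> x = -v then x else u x)"
    have "u = sE a v w"
    proof
      fix x show "u x = sE a v w x"
        unfolding sE_def w_def using ua uma uv umv by auto
    qed
    moreover have "w \<in> sInv ?S'"
    proof -
      have "\<forall>x. x \<notin> sA ?S' \<longrightarrow> w x = x"
      proof (intro allI impI)
        fix x assume x: "x \<notin> sA ?S'"
        show "w x = x"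
        proof (cases "x = a \<or> x = -a \<or> x = v \<or> x = -v")
          case True then show ?thesis unfolding w_def by auto
        next
          case False
          then have "x \<notin> sA (insert a S)" using x unfolding sA_def by (auto simp: abs_if split: if_splits)
          then show ?thesis using out False unfolding w_def by auto
        qed
      qed
      moreover have "\<forall>x. w (w x) = x"
        unfolding w_def using nf inv by auto
      moreover have "\<forall>x. w (- x) = - w x"
      proof
        fix x
        show "w (- x) = - w x"
        proof (cases "x = a \<or> x = -a \<or> x = v \<or> x = -v")
          case True then show ?thesis unfolding w_def by auto
        next
          case False
          then have "\<not> (-x = a \<or> -x = -a \<or> -x = v \<or> -x = -v)" by auto
          then show ?thesis using False odd unfolding w_def by auto
        qed
      qed
      ultimately show ?thesis unfolding sInv_def by auto
    qed
    ultimately show "u \<in> sE a v ` sInv ?S'" by auto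
  qed
qed



lemma prod_sE:
  assumes pos: "\<forall>x\<in>insert a S. x > 0" and aS: "a \<notin> S" and v: "v \<in> sA (insert a S)"
    and fin: "finite S" and w: "w \<in> sInv (S - {\<bar>v\<bar>})"
  shows "sgn (\<Prod>i\<in>insert a S. sE a v w i) =
     (if v = a then sgn (\<Prod>i\<in>S. w i) else if v = -a then - sgn (\<Prod>i\<in>S. w i)
      else sgn (\<Prod>i\<in>S - {\<bar>v\<bar>}. w i))"
proof -
  have a0: "a > 0" using pos by auto
  have P1: "(\<Prod>i\<in>insert a S. sE a v w i) = v * (\<Prod>i\<in>S. sE a v w i)"
    using aS fin by (simp add: sE_def)
  show ?thesis
  proof (cases "v = a \<or> v = -a")
    case True
    have "(\<Prod>i\<in>S. sE a v w i) = (\<Prod>i\<in>S. w i)"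
    proof (rule prod.cong)
      fix i assume "i \<in> S"
      then have "i \<noteq> a" "i \<noteq> -a" "i \<noteq> v" "i \<noteq> -v" using aS pos True by auto
      then show "sE a v w i = w i" unfolding sE_def by simp
    qed simp
    then show ?thesis using True P1 a0 by (auto simp: sgn_mult)
  next
    case False
    define b where "b = \<bar>v\<bar>"
    have bS: "b \<in> S" using v False pos unfolding sA_def b_def by (auto simp: abs_if)
    have b0: "b > 0" using bS pos by auto
    have "S = insert b (S - {b})" using bS by auto
    then have "(\<Prod>i\<in>S. sE a v w i) = sE a v w b * (\<Prod>i\<in>S - {b}. sE a v w i)"
      using fin by (metis finite_Diff prod.insert Diff_iff singletonI)
    moreover have "(\<Prod>i\<in>S - {b}. sE a v w i) = (\<Prod>i\<in>S - {b}. w i)"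
    proof (rule prod.cong)
      fix i assume "i \<in> S - {b}"
      then have "i \<noteq> a" "i \<noteq> -a" "i \<noteq> v" "i \<noteq> -v" using aS pos b_def by (auto simp: abs_if)
      then show "sE a v w i = w i" unfolding sE_def by simp
    qed simp
    moreover have "v * sE a v w b = a * b"
      using False b_def a0 b0 unfolding sE_def by (auto simp: abs_if)
    ultimately have "(\<Prod>i\<in>insert a S. sE a v w i) = (a * b) * (\<Prod>i\<in>S - {b}. w i)"
      using P1 by (simp add: mult.assoc)
    then show ?thesis using False a0 b0 b_def by (simp add: sgn_mult)
  qed
qed

lemma sT_insert:
  assumes pos: "\<forall>x\<in>insert a S. x > 0" and aS: "a \<notin> S" and fin: "finite S"
  shows "sT (insert a S) = 2 * (\<Sum>b\<in>S. sT (S - {b}))"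
proof -
  let ?f = "\<lambda>w. sgn (\<Prod>i\<in>insert a S. w i)"
  let ?A = "sA (insert a S)"
  have finA: "finite ?A" using fin by (intro finite_sA) simp
  have finI: "finite (sInv (insert a S))" using fin by (intro finite_sInv) simp
  have "sT (insert a S) = (\<Sum>v\<in>?A. \<Sum>w\<in>{w \<in> sInv (insert a S). w a = v}. ?f w)"
    unfolding sT_def
  proof (rule sum.group[symmetric, OF finI finA])
    show "(\<lambda>w. w a) ` sInv (insert a S) \<subseteq> ?A"
      using sInv_maps by (auto simp: sA_def)
  qed
  also have "\<dots> = (\<Sum>v\<in>?A. \<Sum>w\<in>sInv (S - {\<bar>v\<bar>}). ?f (sE a v w))"
  proof (rule sum.cong[OF refl])
    fix v assume v: "v \<in> ?A"
    show "(\<Sum>w\<in>{w \<in> sInv (insert a S). w a = v}. ?f w) = (\<Sum>w\<in>sInv (S - {\<bar>v\<bar>}). ?f (sE a v w))"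
      using sum.reindex[OF fiber(2)[OF pos aS v], of ?f] fiber(1)[OF pos aS v] by (simp add: o_def)
  qed
  also have "\<dots> = (\<Sum>v\<in>?A. (if v = a then sT S else if v = -a then - sT S else sT (S - {\<bar>v\<bar>})))"
  proof (rule sum.cong[OF refl])
    fix v assume v: "v \<in> ?A"
    have "(\<Sum>w\<in>sInv (S - {\<bar>v\<bar>}). ?f (sE a v w)) = (\<Sum>w\<in>sInv (S - {\<bar>v\<bar>}).
      (if v = a then sgn (\<Prod>i\<in>S. w i) else if v = -a then - sgn (\<Prod>i\<in>S. w i)
      else sgn (\<Prod>i\<in>S - {\<bar>v\<bar>}. w i)))"
      by (rule sum.cong[OF refl], rule prod_sE[OF pos aS v fin])
    also have "\<dots> = (if v = a then sT S else if v = -a then - sT S else sT (S - {\<bar>v\<bar>}))"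
    proof (cases "v = a")
      case True
      then have "S - {\<bar>v\<bar>} = S" using pos aS by auto
      then show ?thesis using True unfolding sT_def by simp
    next
      case False
      show ?thesis
      proof (cases "v = -a")
        case True
        then have "S - {\<bar>v\<bar>} = S" using pos aS by auto
        then show ?thesis using True False unfolding sT_def by (simp add: sum_negf)
      next
        case False2: False
        then show ?thesis using False unfolding sT_def by simp
      qed
    qed
    finally show "(\<Sum>w\<in>sInv (S - {\<bar>v\<bar>}). ?f (sE a v w)) = (if v = a then sT S else if v = -a then - sT S else sT (S - {\<bar>v\<bar>}))" .
  qed
  also have "\<dots> = (\<Sum>b\<in>S. sT (S - {b})) + (\<Sum>b\<in>S. sT (S - {b}))"
  proof -
    have Aeq: "?A = insert a (insert (-a) (S \<union> uminus ` S))"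
      unfolding sA_def by (auto simp: image_iff) (metis minus_minus)+
    have a0: "a > 0" using pos by auto
    have d1: "a \<notin> insert (-a) (S \<union> uminus ` S)" using a0 aS pos by auto
    have d2: "-a \<notin> S \<union> uminus ` S" using a0 aS pos by auto
    have nn: False if "x \<in> S" "- x \<in> S" for x
    proof -
      have "x > 0" "- x > 0" using pos that by auto
      then show False by linarith
    qed
    have d3: "S \<inter> uminus ` S = {}" using nn by auto
    let ?h = "\<lambda>v. (if v = a then sT S else if v = -a then - sT S else sT (S - {\<bar>v\<bar>}))"
    have "sum ?h ?A = ?h a + (?h (-a) + sum ?h (S \<union> uminus ` S))"
      unfolding Aeq using d1 d2 fin by simp
    also have "sum ?h (S \<union> uminus ` S) = sum ?h S + sum ?h (uminus ` S)"
      using d3 fin by (simp add: sum.union_disjoint)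
    also have "sum ?h S = (\<Sum>b\<in>S. sT (S - {b}))"
      by (rule sum.cong[OF refl]) (use aS pos in auto)
    also have "sum ?h (uminus ` S) = (\<Sum>b\<in>S. sT (S - {b}))"
      by (subst sum.reindex) (use aS pos a0 in \<open>auto intro!: sum.cong simp: inj_on_def\<close>)
    finally show ?thesis using a0 by simp
  qed
  finally show ?thesis by simp
qed

fun gB :: "nat \<Rightarrow> int" where
  "gB 0 = 1"
| "gB (Suc 0) = 0"
| "gB (Suc (Suc m)) = 2 * int (Suc m) * gB m"

lemma sT_card: "finite S \<Longrightarrow> \<forall>x\<in>S. x > 0 \<Longrightarrow> sT S = gB (card S)"
proof (induction "card S" arbitrary: S rule: less_induct)
  case less
  show ?case
  proof (cases "S = {}")
    case True then show ?thesis by (simp add: sT_empty)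
  next
    case False
    then obtain a where a: "a \<in> S" by auto
    define S0 where "S0 = S - {a}"
    have S: "S = insert a S0" and aS0: "a \<notin> S0" using a S0_def by auto
    have fin0: "finite S0" using less.prems S0_def by auto
    have c: "card S = Suc (card S0)" using S aS0 fin0 by simp
    have "sT S = 2 * (\<Sum>b\<in>S0. sT (S0 - {b}))"
      using sT_insert[of a S0] S aS0 fin0 less.prems by simp
    also have "\<dots> = 2 * (\<Sum>b\<in>S0. gB (card S0 - 1))"
    proof -
      have "sT (S0 - {b}) = gB (card S0 - 1)" if b: "b \<in> S0" for b
      proof -
        have "card (S0 - {b}) = card S0 - 1" using b fin0 by simp
        moreover have "card (S0 - {b}) < card S" using c b fin0
          by (metis card_Diff1_less_iff less_SucI)
        ultimately show ?thesis using less.hyps[of "S0 - {b}"] fin0 less.prems S0_def by auto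
      qed
      then show ?thesis by simp
    qed
    also have "\<dots> = gB (card S)"
    proof (cases "card S0")
      case 0 then show ?thesis using c by simp
    next
      case (Suc k) then show ?thesis using c by simp
    qed
    finally show ?thesis .
  qed
qed



lemma sA_interval: "sA {1..int n} = {- int n .. int n} - {0}"
  unfolding sA_def by auto

lemma IB_eq: "{w \<in> typeB n. w \<circ> w = id} = sInv {1..int n}"
proof (intro equalityI subsetI)
  fix w assume "w \<in> {w \<in> typeB n. w \<circ> w = id}"
  then have p: "w permutes sA {1..int n}" and o: "\<forall>i. w (- i) = - w i" and ww: "w \<circ> w = id"
    unfolding typeB_def sA_interval by auto
  have "\<forall>x. w (w x) = x" using ww by (metis comp_apply id_apply)
  then show "w \<in> sInv {1..int n}" using p o unfolding sInv_def permutes_def by auto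
next
  fix w assume w: "w \<in> sInv {1..int n}"
  have "w permutes sA {1..int n}" using sInv_permutes[OF w] .
  moreover have "w \<circ> w = id" using w unfolding sInv_def by (auto simp: fun_eq_iff)
  ultimately show "w \<in> {w \<in> typeB n. w \<circ> w = id}"
    using w unfolding typeB_def sInv_def sA_interval by auto
qed

lemma ID_eq: "{w \<in> typeD n. w \<circ> w = id} = {w \<in> sInv {1..int n}. (\<Prod>i\<in>{1 .. int n}. w i) > 0}"
  using IB_eq[of n] unfolding typeD_def by auto

lemma prod_nz: "w \<in> sInv {1..int n} \<Longrightarrow> (\<Prod>i\<in>{1 .. int n}. w i) \<noteq> 0"
proof -
  assume w: "w \<in> sInv {1..int n}"
  have "w i \<noteq> 0" if "i \<in> {1..int n}" for i
  proof -
    have "i \<in> sA {1..int n}" using that unfolding sA_def by auto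
    then have "w i \<in> sA {1..int n}" using sInv_maps[OF w] by auto
    then show ?thesis unfolding sA_def by auto
  qed
  then show ?thesis by simp
qed

lemma gB_closed: "gB n = (if odd n then 0 else 2 ^ (n div 2) * int (dfact (n - 1)))"
proof (induction n rule: gB.induct)
  case 1 then show ?case by simp
next
  case 2 then show ?case by simp
next
  case (3 m)
  show ?case
  proof (cases m)
    case 0 then show ?thesis by simp
  next
    case (Suc j)
    show ?thesis
    proof (cases j)
      case 0 then show ?thesis using Suc by simp
    next
      case (Suc i)
      then show ?thesis using 3 \<open>m = Suc j\<close> by (auto simp: algebra_simps)
    qed
  qed
qed

lemma dfact_fact: "2 ^ k * dfact (2 * k - 1) * fact k = (fact (2 * k) :: nat)"
proof (induction k)
  case 0 then show ?case by simp
next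
  case (Suc k)
  have d: "dfact (2 * Suc k - 1) = (2 * k + 1) * dfact (2 * k - 1)"
  proof (cases k)
    case 0 then show ?thesis by simp
  next
    case (Suc j)
    then have "2 * Suc k - 1 = Suc (Suc (2 * k - 1))" by simp
    then show ?thesis using Suc by simp
  qed
  have f: "fact (2 * Suc k) = (2 * k + 2) * (2 * k + 1) * (fact (2 * k) :: nat)"
    by (simp add: algebra_simps)
  show ?case unfolding d f Suc.IH[symmetric] by (simp add: algebra_simps)
qed

theorem lemma5p13:
  fixes n :: nat
  assumes "n \<ge> 1"
  shows "2 * int (num_involutions (typeD n)) - int (num_involutions (typeB n)) =
           (if odd n then 0 else 2 ^ (n div 2) * int (dfact (n - 1)))
       \<and> (even n \<longrightarrow> real (2 ^ (n div 2) * dfact (n - 1)) = fact n / fact (n div 2))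
       \<and> num_involutions (typeD n) \<le> num_involutions (typeB n)
       \<and> num_involutions (typeB n) \<le> 2 * num_involutions (typeD n)"
proof -
  let ?S = "{1..int n}"
  let ?P = "\<lambda>w. (\<Prod>i\<in>?S. w i)"
  let ?IB = "sInv ?S"
  let ?ID = "{w \<in> sInv ?S. ?P w > 0}"
  have finB: "finite ?IB" by (rule finite_sInv) simp
  have sub: "?ID \<subseteq> ?IB" by auto
  have nB: "num_involutions (typeB n) = card ?IB" unfolding num_involutions_def IB_eq ..
  have nD: "num_involutions (typeD n) = card ?ID" unfolding num_involutions_def ID_eq ..
  have "sT ?S = (\<Sum>w\<in>?IB. if ?P w > 0 then 1 else -1)"
    unfolding sT_def
  proof (rule sum.cong[OF refl])
    fix w assume "w \<in> ?IB"
    then have "?P w \<noteq> 0" using prod_nz by blast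
    then show "sgn (?P w) = (if ?P w > 0 then 1 else -1)" by (auto simp: sgn_if)
  qed
  also have "\<dots> = (\<Sum>w\<in>?IB \<inter> {w. ?P w > 0}. 1) + (\<Sum>w\<in>?IB \<inter> - {w. ?P w > 0}. -1)"
    by (rule sum.If_cases[OF finB])
  also have "?IB \<inter> {w. ?P w > 0} = ?ID" by blast
  also have "?IB \<inter> - {w. ?P w > 0} = ?IB - ?ID" by blast
  also have "(\<Sum>w\<in>?ID. (1::int)) + (\<Sum>w\<in>?IB - ?ID. -1) = int (card ?ID) - int (card (?IB - ?ID))"
    by simp
  also have "card (?IB - ?ID) = card ?IB - card ?ID"
    using finB sub by (simp add: card_Diff_subset finite_subset)
  finally have eq1: "sT ?S = int (card ?ID) - int (card ?IB - card ?ID)" .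
  have le1: "card ?ID \<le> card ?IB" using finB sub card_mono by blast
  have eq2: "sT ?S = gB n"
    using sT_card[of ?S] by simp
  have main: "2 * int (card ?ID) - int (card ?IB) = (if odd n then 0 else 2 ^ (n div 2) * int (dfact (n - 1)))"
    using eq1 eq2 gB_closed[of n] le1 by (simp add: of_nat_diff)
  have nonneg: "(if odd n then 0 else 2 ^ (n div 2) * int (dfact (n - 1))) \<ge> 0" by simp
  have part2: "even n \<longrightarrow> real (2 ^ (n div 2) * dfact (n - 1)) = fact n / fact (n div 2)"
  proof
    assume "even n"
    then obtain k where k: "n = 2 * k" by auto
    have "real (2 ^ k * dfact (2 * k - 1) * fact k) = real (fact (2 * k))"
      using dfact_fact[of k] by simp
    then have "real (2 ^ k * dfact (2 * k - 1)) * fact k = fact (2 * k)"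
      by (simp add: of_nat_fact)
    then show "real (2 ^ (n div 2) * dfact (n - 1)) = fact n / fact (n div 2)"
      using k by (simp add: field_simps)
  qed
  have "card ?IB \<le> 2 * card ?ID" using main nonneg by linarith
  then show ?thesis using main part2 le1 unfolding nB nD by blast
qed

end
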